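(* Let $G=(V,E,w)$ be a connected weighted graph with $n$ vertices, let $e\in E$, and let $k\in\mathbb{R}$. Then $$ \sum_{\{s,t\}\subseteq V}\Big((\widetilde\partial 1_e)^{T}(L^{+})^{k}(1_s-1_t)\Big)^{2}=n\cdot w_e\cdot\big(H^{(2k)}_{e}\big)^{2}, $$ where the sum is over unordered pairs of distinct vertices.
   Context: $G=(V,E,w)$ is undirected with positive edge weights. Each edge is given an arbitrary fixed orientation; the boundary matrix $\partial\in\mathbb{R}^{|V|\times|E|}$ has column $\partial 1_e=1_s-1_t$ for $e=(s,t)$, where $1_x$ is the indicator vector of $x$. $W$ is the diagonal weight matrix, $\widetilde\partial=\partial W^{1/2}$, and $L=\widetilde\partial\widetilde\partial^{T}$ is the graph Laplacian with spectral decomposition $L=\sum_i\lambda_i x_ix_i^{T}$. For $k\in\mathbb{R}$, $(L^{+})^{k}:=\sum_{i:\lambda_i>0}\lambda_i^{-k}x_ix_i^{T}$ (so $(L^+)^0$ is the orthogonal projection onto $\mathrm{im}(L)$). The $k$-harmonic distance is $H^{(k)}_{st}=\sqrt{(1_s-1_t)^{T}(L^{+})^{k}(1_s-1_t)}$, and $H^{(k)}_e:=H^{(k)}_{st}$ for $e=\{s,t\}$. *)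

theory Defs
  imports "HOL-Analysis.Analysis"
begin

text \<open>Weighted graph: vertices = finite type 'v, edges = finite type 'e, each edge e
  carries a fixed orientation (src e, tgt e) and a weight w e.\<close>

definition ind :: "'a::finite \<Rightarrow> real ^ 'a" where
  "ind a = (\<chi> b. if b = a then 1 else 0)"

definition boundary :: "('e \<Rightarrow> 'v) \<Rightarrow> ('e \<Rightarrow> 'v) \<Rightarrow> real ^ 'e ^ 'v" where
  "boundary src tgt = (\<chi> v e. (if v = src e then 1 else 0) - (if v = tgt e then 1 else 0))"

definition sqrt_weight :: "('e::finite \<Rightarrow> real) \<Rightarrow> real ^ 'e ^ 'e" where
  "sqrt_weight w = (\<chi> i j. if i = j then sqrt (w i) else 0)"

definition wboundary :: "('e::finite \<Rightarrow> 'v::finite) \<Rightarrow> ('e \<Rightarrow> 'v) \<Rightarrow> ('e \<Rightarrow> real) \<Rightarrow> real ^ 'e ^ 'v" where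
  "wboundary src tgt w = boundary src tgt ** sqrt_weight w"

definition laplacian :: "('e::finite \<Rightarrow> 'v::finite) \<Rightarrow> ('e \<Rightarrow> 'v) \<Rightarrow> ('e \<Rightarrow> real) \<Rightarrow> real ^ 'v ^ 'v" where
  "laplacian src tgt w = wboundary src tgt w ** transpose (wboundary src tgt w)"

definition outer :: "real ^ 'n \<Rightarrow> real ^ 'n \<Rightarrow> real ^ 'n ^ 'n" where
  "outer x y = (\<chi> i j. x $ i * y $ j)"

definition spectral_decomp :: "real ^ 'v ^ 'v \<Rightarrow> ('v::finite \<Rightarrow> real) \<Rightarrow> ('v \<Rightarrow> real ^ 'v) \<Rightarrow> bool" where
  "spectral_decomp L lam x \<longleftrightarrow>
     (\<forall>i j. x i \<bullet> x j = (if i = j then 1 else 0)) \<and>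
     L = (\<Sum>i\<in>UNIV. lam i *\<^sub>R outer (x i) (x i))"

definition pinv_pow :: "('v::finite \<Rightarrow> real) \<Rightarrow> ('v \<Rightarrow> real ^ 'v) \<Rightarrow> real \<Rightarrow> real ^ 'v ^ 'v" where
  "pinv_pow lam x k = (\<Sum>i\<in>{i. lam i > 0}. (lam i powr (- k)) *\<^sub>R outer (x i) (x i))"

definition harmonic_dist :: "('v::finite \<Rightarrow> real) \<Rightarrow> ('v \<Rightarrow> real ^ 'v) \<Rightarrow> real \<Rightarrow> 'v \<Rightarrow> 'v \<Rightarrow> real" where
  "harmonic_dist lam x k s t =
     sqrt ((ind s - ind t) \<bullet> (pinv_pow lam x k *v (ind s - ind t)))"

definition connected_graph :: "('e \<Rightarrow> 'v) \<Rightarrow> ('e \<Rightarrow> 'v) \<Rightarrow> bool" where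
  "connected_graph src tgt \<longleftrightarrow>
     (\<forall>s t. (s, t) \<in> ({(src e, tgt e) | e. True} \<union> {(tgt e, src e) | e. True})\<^sup>*)"

end

theory Submission
  imports Defs
begin

lemma Q_apply:
  fixes x :: "'v::finite \<Rightarrow> real ^ 'v"
  shows "(\<Sum>i\<in>I. c i *\<^sub>R outer (x i) (x i)) *v v = (\<Sum>i\<in>I. (c i * (x i \<bullet> v)) *\<^sub>R x i)"
  by (simp add: vec_eq_iff matrix_vector_mult_def outer_def inner_vec_def sum_distrib_left
      sum_distrib_right sum.swap[of _ I] ac_simps)

lemma ortho_inner:
  fixes x :: "'v::finite \<Rightarrow> real ^ 'v"
  assumes on: "\<forall>i j. x i \<bullet> x j = (if i = j then 1 else 0)"
  shows "x j \<bullet> (\<Sum>i\<in>I. a i *\<^sub>R x i) = (if j \<in> I then a j else 0)"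
proof -
  have "x j \<bullet> (\<Sum>i\<in>I. a i *\<^sub>R x i) = (\<Sum>i\<in>I. a i * (if j = i then 1 else 0))"
    by (simp add: inner_sum_right on)
  also have "\<dots> = (if j \<in> I then a j else 0)"
    by (simp add: if_distrib cong: if_cong)
  finally show ?thesis .
qed

lemma ortho_inner2:
  fixes x :: "'v::finite \<Rightarrow> real ^ 'v"
  assumes on: "\<forall>i j. x i \<bullet> x j = (if i = j then 1 else 0)"
  shows "(\<Sum>i\<in>I. a i *\<^sub>R x i) \<bullet> (\<Sum>i\<in>I. b i *\<^sub>R x i) = (\<Sum>i\<in>I. a i * b i)"
  by (simp add: inner_sum_left ortho_inner[OF on] cong: sum.cong)

lemma pair_sum:
  fixes f :: "'v::{finite,linorder} \<Rightarrow> real"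
  shows "(\<Sum>(s, t)\<in>{(s, t). s < t}. (f s - f t)\<^sup>2) = real CARD('v) * (\<Sum>s\<in>UNIV. (f s)\<^sup>2) - (\<Sum>s\<in>UNIV. f s)\<^sup>2"
proof -
  let ?g = "\<lambda>(s::'v, t). (f s - f t)\<^sup>2"
  have all: "(\<Sum>p\<in>UNIV. ?g p) = 2 * real CARD('v) * (\<Sum>s\<in>UNIV. (f s)\<^sup>2) - 2 * (\<Sum>s\<in>UNIV. f s)\<^sup>2"
  proof -
    have "(\<Sum>p\<in>UNIV. ?g p) = (\<Sum>s\<in>UNIV. \<Sum>t\<in>UNIV. (f s)\<^sup>2 + (f t)\<^sup>2 - 2 * f s * f t)"
      unfolding UNIV_Times_UNIV[symmetric] sum.cartesian_product[symmetric]
      by (simp add: power2_diff)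
    also have "\<dots> = 2 * real CARD('v) * (\<Sum>s\<in>UNIV. (f s)\<^sup>2) - 2 * (\<Sum>s\<in>UNIV. f s)\<^sup>2"
      by (simp add: sum.distrib sum_subtractf sum_distrib_left sum_distrib_right power2_eq_square
          mult.assoc sum_product) (simp add: ac_simps)
    finally show ?thesis .
  qed
  have U: "(UNIV :: ('v \<times> 'v) set) = {(s, t). s < t} \<union> {(s, t). t < s} \<union> {(s, t). s = t}"
    by auto
  have "(\<Sum>p\<in>UNIV. ?g p) = (\<Sum>p\<in>{(s, t). s < t}. ?g p) + (\<Sum>p\<in>{(s, t). t < s}. ?g p) + (\<Sum>p\<in>{(s, t). s = t}. ?g p)"
    unfolding U
    by (subst sum.union_disjoint; (auto)?; subst sum.union_disjoint; auto)
  moreover have "(\<Sum>p\<in>{(s, t). t < s}. ?g p) = (\<Sum>p\<in>{(s, t). s < t}. ?g p)"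
  proof (rule sum.reindex_bij_witness[of _ prod.swap prod.swap])
  qed (auto simp: power2_commute)
  moreover have "(\<Sum>p\<in>{(s, t). s = t}. ?g p) = 0"
    by (rule sum.neutral) auto
  ultimately show ?thesis using all by simp
qed

lemma inner_ind:
  fixes y :: "real ^ 'v::finite"
  shows "y \<bullet> ind s = y $ s"
proof -
  have "y \<bullet> ind s = (\<Sum>i\<in>UNIV. if i = s then y $ i else 0)"
    unfolding inner_vec_def ind_def by (intro sum.cong) auto
  then show ?thesis by simp
qed

lemma inner_ind_diff:
  fixes y :: "real ^ 'v::finite"
  shows "y \<bullet> (ind s - ind t) = y $ s - y $ t"
  by (simp add: inner_diff_right inner_ind)

lemma sum_mult_delta:
  fixes g :: "'a::finite \<Rightarrow> real"
  shows "(\<Sum>k\<in>UNIV. g k * (if k = j then c else 0)) = g j * c"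
proof -
  have "(\<Sum>k\<in>UNIV. g k * (if k = j then c else 0)) = (\<Sum>k\<in>UNIV. if k = j then g k * c else 0)"
    by (intro sum.cong) auto
  then show ?thesis by simp
qed

lemma mat_ind:
  fixes A :: "real ^ 'n::finite ^ 'm"
  shows "(A *v ind j) $ i = A $ i $ j"
  unfolding matrix_vector_mult_def ind_def by (simp add: sum_mult_delta)

lemma wb_entry:
  "wboundary src tgt w $ v $ f = ((if v = src f then 1 else 0) - (if v = tgt f then 1 else 0)) * sqrt (w f)"
proof -
  have "wboundary src tgt w $ v $ f = (\<Sum>g\<in>UNIV. ((if v = src g then 1 else 0) - (if v = tgt g then 1 else 0)) * (if g = f then sqrt (w f) else 0))"
    unfolding wboundary_def matrix_matrix_mult_def boundary_def sqrt_weight_def vec_lambda_beta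
    by (intro sum.cong) auto
  then show ?thesis by (simp only: sum_mult_delta)
qed

lemma wb_ind:
  "wboundary src tgt w *v ind e = sqrt (w e) *\<^sub>R (ind (src e) - ind (tgt e))"
  unfolding vec_eq_iff mat_ind wb_entry by (simp add: ind_def)

lemma one_wb:
  "vec 1 v* wboundary src tgt w = 0"
proof -
  have "(vec 1 v* wboundary src tgt w) $ f = 0" for f
  proof -
    have "(vec 1 v* wboundary src tgt w) $ f = (\<Sum>v\<in>UNIV. ((if v = src f then 1 else 0) - (if v = tgt f then 1 else 0)) * sqrt (w f))"
      unfolding vector_matrix_mult_def by (simp add: wb_entry)
    also have "\<dots> = 0"
      unfolding sum_distrib_right[symmetric] sum_subtractf by simp
    finally show ?thesis .
  qed
  then show ?thesis by (simp add: vec_eq_iff)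
qed

theorem theorem6p1:
  fixes src tgt :: "'e::finite \<Rightarrow> 'v::{finite,linorder}"
    and w :: "'e \<Rightarrow> real"
    and lam :: "'v \<Rightarrow> real" and x :: "'v \<Rightarrow> real ^ ('v::{finite,linorder})"
    and e :: 'e and k :: real
  assumes no_loops: "\<And>f. src f \<noteq> tgt f"
    and simple: "inj (\<lambda>f. {src f, tgt f})"
    and pos: "\<And>f. w f > 0"
    and conn: "connected_graph src tgt"
    and spec: "spectral_decomp (laplacian src tgt w) lam x"
  shows "(\<Sum>(s, t)\<in>{(s, t). s < t}.
            ((wboundary src tgt w *v ind e) \<bullet> (pinv_pow lam x k *v (ind s - ind t)))\<^sup>2)
         = real CARD('v) * w e * (harmonic_dist lam x (2 * k) (src e) (tgt e))\<^sup>2"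
proof -
  have on: "\<forall>i j. x i \<bullet> x j = (if i = j then 1 else 0)"
    and Ldef: "laplacian src tgt w = (\<Sum>i\<in>UNIV. lam i *\<^sub>R outer (x i) (x i))"
    using spec unfolding spectral_decomp_def by auto
  define I where "I = {i. lam i > 0}"
  define c where "c i = lam i powr (- k)" for i
  define d where "d = ind (src e) - ind (tgt e)"
  define b where "b = wboundary src tgt w *v ind e"
  have bd: "b = sqrt (w e) *\<^sub>R d" unfolding b_def d_def by (rule wb_ind)
  define Y where "Y = (\<Sum>i\<in>I. (c i * (x i \<bullet> b)) *\<^sub>R x i)"
  have P: "pinv_pow lam x k = (\<Sum>i\<in>I. c i *\<^sub>R outer (x i) (x i))"
    unfolding pinv_pow_def I_def c_def ..
  have termeq: "b \<bullet> (pinv_pow lam x k *v (ind s - ind t)) = Y $ s - Y $ t" for s t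
  proof -
    have "b \<bullet> (pinv_pow lam x k *v (ind s - ind t)) = Y \<bullet> (ind s - ind t)"
      unfolding P Q_apply Y_def
      by (simp add: inner_sum_left inner_sum_right inner_commute ac_simps)
    then show ?thesis by (simp add: inner_ind_diff)
  qed
  have eig: "laplacian src tgt w *v x j = lam j *\<^sub>R x j" for j
  proof -
    have "laplacian src tgt w *v x j = (\<Sum>i\<in>UNIV. (lam i * (if i = j then 1 else 0)) *\<^sub>R x i)"
      unfolding Ldef Q_apply by (simp add: on)
    also have "\<dots> = (\<Sum>i\<in>UNIV. if i = j then lam j *\<^sub>R x j else 0)"
      by (intro sum.cong) auto
    also have "\<dots> = lam j *\<^sub>R x j" by simp
    finally show ?thesis .
  qed
  have perp: "vec 1 \<bullet> x j = 0" if "j \<in> I" for j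
  proof -
    have "vec 1 \<bullet> (laplacian src tgt w *v x j) = 0"
      unfolding dot_lmul_matrix[symmetric] laplacian_def vector_matrix_mul_assoc[symmetric] one_wb
      by simp
    then have "lam j * (vec 1 \<bullet> x j) = 0" by (simp add: eig)
    then show ?thesis using that unfolding I_def by simp
  qed
  have sumY: "(\<Sum>s\<in>UNIV. Y $ s) = 0"
  proof -
    have "(\<Sum>s\<in>UNIV. Y $ s) = vec 1 \<bullet> Y" by (simp add: inner_vec_def)
    also have "\<dots> = 0" unfolding Y_def
      unfolding inner_sum_right inner_scaleR_right
      by (intro sum.neutral ballI) (simp only: perp mult_zero_right)
    finally show ?thesis .
  qed
  have sumY2: "(\<Sum>s\<in>UNIV. (Y $ s)\<^sup>2) = w e * (\<Sum>i\<in>I. lam i powr (- (2 * k)) * (x i \<bullet> d)\<^sup>2)"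
  proof -
    have "(\<Sum>s\<in>UNIV. (Y $ s)\<^sup>2) = Y \<bullet> Y" by (simp add: inner_vec_def power2_eq_square)
    also have "\<dots> = (\<Sum>i\<in>I. (c i * (x i \<bullet> b))\<^sup>2)"
      unfolding Y_def ortho_inner2[OF on] by (simp add: power2_eq_square)
    also have "\<dots> = (\<Sum>i\<in>I. w e * (lam i powr (- (2 * k)) * (x i \<bullet> d)\<^sup>2))"
    proof (rule sum.cong[OF refl])
      fix i assume "i \<in> I"
      then have "lam i > 0" unfolding I_def by simp
      then have "(c i)\<^sup>2 = lam i powr (- (2 * k))"
        unfolding c_def power2_eq_square powr_add[symmetric] by simp
      then show "(c i * (x i \<bullet> b))\<^sup>2 = w e * (lam i powr (- (2 * k)) * (x i \<bullet> d)\<^sup>2)"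
        using pos[of e] unfolding bd by (simp add: power_mult_distrib)
    qed
    finally show ?thesis by (simp add: sum_distrib_left)
  qed
  have H: "(harmonic_dist lam x (2 * k) (src e) (tgt e))\<^sup>2 = (\<Sum>i\<in>I. lam i powr (- (2 * k)) * (x i \<bullet> d)\<^sup>2)"
  proof -
    have eq: "d \<bullet> (pinv_pow lam x (2 * k) *v d) = (\<Sum>i\<in>I. lam i powr (- (2 * k)) * (x i \<bullet> d)\<^sup>2)"
      unfolding pinv_pow_def I_def[symmetric] Q_apply
      by (simp add: inner_sum_right inner_commute power2_eq_square ac_simps)
    have "0 \<le> (\<Sum>i\<in>I. lam i powr (- (2 * k)) * (x i \<bullet> d)\<^sup>2)"
      by (intro sum_nonneg) simp
    then show ?thesis unfolding harmonic_dist_def d_def[symmetric] eq by simp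
  qed
  have "(\<Sum>(s, t)\<in>{(s, t). s < t}. (b \<bullet> (pinv_pow lam x k *v (ind s - ind t)))\<^sup>2)
      = (\<Sum>(s, t)\<in>{(s, t). s < t}. (Y $ s - Y $ t)\<^sup>2)"
    by (simp add: termeq)
  also have "\<dots> = real CARD('v) * (\<Sum>s\<in>UNIV. (Y $ s)\<^sup>2) - (\<Sum>s\<in>UNIV. Y $ s)\<^sup>2"
    by (rule pair_sum)
  finally show ?thesis unfolding b_def[symmetric] sumY sumY2 H by simp
qed

end
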